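(* Let $(V,C,[p_{i,c}],k)$ be an ABC instance under the Candidate-Probability model with $0<p_{i,c}<1$ for all voters $i\in V$ and all candidates $c\in C$. Then a committee $W\subseteq C$ with $|W|=k$ satisfies JR with respect to every plausible approval profile if and only if $W=C$ and $k=|C|$.
   Context: An ABC instance consists of voters $V=[n]$, candidates $C=[m]$, an approval profile $A=(A_1,\dots,A_n)$ with $A_i\subseteq C$, and a positive integer $k$. A committee is a set $W\subseteq C$ with $|W|=k$. $W$ satisfies justified representation (JR) with respect to $A$ if for every $V'\subseteq V$ with $|V'|\ge \frac{n}{k}$ and $\bigcap_{i\in V'}A_i\neq\emptyset$, there is $i\in V'$ with $A_i\cap W\neq\emptyset$. In the Candidate-Probability model each voter $i$ approves each candidate $c$ independently with probability $p_{i,c}$. A plausible approval profile is one with positive probability. *)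

theory Defs
  imports Main "HOL-Analysis.Analysis"
begin

definition JR :: "'v set \<Rightarrow> ('v \<Rightarrow> 'c set) \<Rightarrow> nat \<Rightarrow> 'c set \<Rightarrow> bool" where
  "JR V A k W \<longleftrightarrow>
     (\<forall>V'. V' \<subseteq> V \<longrightarrow> real (card V') \<ge> real (card V) / real k \<longrightarrow>
        (\<Inter>i\<in>V'. A i) \<noteq> {} \<longrightarrow> (\<exists>i\<in>V'. A i \<inter> W \<noteq> {}))"

definition profile_prob :: "'v set \<Rightarrow> 'c set \<Rightarrow> ('v \<Rightarrow> 'c \<Rightarrow> real) \<Rightarrow> ('v \<Rightarrow> 'c set) \<Rightarrow> real" where
  "profile_prob V C p A =
     (\<Prod>i\<in>V. \<Prod>c\<in>C. if c \<in> A i then p i c else 1 - p i c)"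

definition plausible :: "'v set \<Rightarrow> 'c set \<Rightarrow> ('v \<Rightarrow> 'c \<Rightarrow> real) \<Rightarrow> ('v \<Rightarrow> 'c set) \<Rightarrow> bool" where
  "plausible V C p A \<longleftrightarrow> (\<forall>i\<in>V. A i \<subseteq> C) \<and> profile_prob V C p A > 0"

end

theory Submission
  imports Defs
begin

theorem lemma2:
  fixes V :: "'v set" and C :: "'c set" and p :: "'v \<Rightarrow> 'c \<Rightarrow> real"
    and k :: nat and W :: "'c set"
  assumes "finite V" and "V \<noteq> {}" and "finite C" and "k > 0"
    and "\<And>i c. i \<in> V \<Longrightarrow> c \<in> C \<Longrightarrow> 0 < p i c \<and> p i c < 1"
    and "W \<subseteq> C" and "card W = k"
  shows "(\<forall>A. plausible V C p A \<longrightarrow> JR V A k W) \<longleftrightarrow> (W = C \<and> k = card C)"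
proof
  assume H: "\<forall>A. plausible V C p A \<longrightarrow> JR V A k W"
  have "W = C"
  proof (rule ccontr)
    assume "W \<noteq> C"
    then obtain c where c: "c \<in> C" "c \<notin> W" using assms(6) by blast
    define A where "A = (\<lambda>i::'v. {c})"
    have "profile_prob V C p A > 0"
      unfolding profile_prob_def
      by (rule prod_pos, rule prod_pos) (use assms(5) in auto)
    hence "plausible V C p A" unfolding plausible_def A_def using c by auto
    hence jr: "JR V A k W" using H by auto
    have kk: "real (card V) / real k \<le> real (card V)"
      using assms(4) by (simp add: divide_le_eq) (simp add: mult_le_cancel_left1)
    have "(\<Inter>i\<in>V. A i) \<noteq> {}" using assms(2) unfolding A_def by auto
    then have "\<exists>i\<in>V. A i \<inter> W \<noteq> {}" using jr kk unfolding JR_def by blast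
    thus False using c unfolding A_def by auto
  qed
  thus "W = C \<and> k = card C" using assms(7) by auto
next
  assume "W = C \<and> k = card C"
  hence WC: "W = C" by auto
  show "\<forall>A. plausible V C p A \<longrightarrow> JR V A k W"
  proof (intro allI impI)
    fix A assume pl: "plausible V C p A"
    show "JR V A k W" unfolding JR_def
    proof (intro allI impI)
      fix V' assume s: "V' \<subseteq> V" and cd: "real (card V) / real k \<le> real (card V')"
        and ne: "(\<Inter>i\<in>V'. A i) \<noteq> {}"
      have "card V > 0" using assms(1,2) by (simp add: card_gt_0_iff)
      hence "real (card V) / real k > 0" using assms(4) by simp
      hence "V' \<noteq> {}" using cd by auto
      then obtain i where i: "i \<in> V'" by auto
      then obtain x where "x \<in> A i" using ne by blast
      moreover have "A i \<subseteq> C" using pl s i unfolding plausible_def by auto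
      ultimately show "\<exists>i\<in>V'. A i \<inter> W \<noteq> {}" using i WC by blast
    qed
  qed
qed

end
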